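(* Let $p\in(1,\infty)$, let $X_1,X_2$ be Banach spaces, $X=X_1\oplus_p X_2$, and $k\in\mathbb{N}$. For every $\varepsilon>0$ and every Lipschitz map $h=(f,g):([\mathbb{N}]^k,d_{\mathbb{H}})\to X$ (with $f:[\mathbb{N}]^k\to X_1$, $g:[\mathbb{N}]^k\to X_2$), there exists $\mathbb{M}\in[\mathbb{N}]^\omega$ such that for every $1\le j\le k$, $$\operatorname{Lip}_j(f_{|[\mathbb{M}]^k})^p+\operatorname{Lip}_j(g_{|[\mathbb{M}]^k})^p\le\operatorname{Lip}_j(h)^p+\varepsilon.$$
   Context: $X_1\oplus_p X_2$ is $X_1\times X_2$ with norm $\|(x_1,x_2)\|=(\|x_1\|^p+\|x_2\|^p)^{1/p}$. For $\mathbb{M}\subset\mathbb{N}$ infinite, $[\mathbb{M}]^k=\{(n_1,\dots,n_k)\in\mathbb{M}^k:n_1<\cdots<n_k\}$ with Hamming distance $d_{\mathbb{H}}(\overline{n},\overline{m})=|\{j:n_j\ne m_j\}|$; $[\mathbb{N}]^\omega$ is the set of infinite subsets of $\mathbb{N}$. $H_j(\mathbb{M})=\{(\overline{n},\overline{m})\in[\mathbb{M}]^k\times[\mathbb{M}]^k: n_i=m_i\ \forall i\ne j,\ n_j<m_j\}$. For $F$ defined on $[\mathbb{M}]^k$ with values in a normed space, $\operatorname{Lip}_j(F)=\sup_{(\overline{n},\overline{m})\in H_j(\mathbb{M})}\|F(\overline{n})-F(\overline{m})\|$; in particular $\operatorname{Lip}_j(h)$ is the supremum over $H_j(\mathbb{N})$.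 *)

theory Defs
  imports "HOL-Analysis.Analysis"
begin

definition kset :: "nat set \<Rightarrow> nat \<Rightarrow> nat list set" where
  "kset M k = {n. length n = k \<and> sorted_wrt (<) n \<and> set n \<subseteq> M}"

definition hamming :: "nat list \<Rightarrow> nat list \<Rightarrow> nat" where
  "hamming n m = card {i. i < length n \<and> n ! i \<noteq> m ! i}"

text \<open>H_j(M), with 0-based coordinate index j (j < k corresponds to 1 \<le> j+1 \<le> k).\<close>
definition Hj :: "nat set \<Rightarrow> nat \<Rightarrow> nat \<Rightarrow> (nat list \<times> nat list) set" where
  "Hj M k j = {(n, m). n \<in> kset M k \<and> m \<in> kset M k \<and>
      (\<forall>i<k. i \<noteq> j \<longrightarrow> n ! i = m ! i) \<and> n ! j < m ! j}"

definition lipj :: "('v \<Rightarrow> real) \<Rightarrow> nat set \<Rightarrow> nat \<Rightarrow> nat \<Rightarrow> (nat list \<Rightarrow> 'v::ab_group_add) \<Rightarrow> real" where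
  "lipj nrm M k j F = (SUP nm \<in> Hj M k j. nrm (F (fst nm) - F (snd nm)))"

definition pnorm :: "real \<Rightarrow> ('a::real_normed_vector \<times> 'b::real_normed_vector) \<Rightarrow> real" where
  "pnorm p x = (norm (fst x) powr p + norm (snd x) powr p) powr (1 / p)"

definition lipschitz_H :: "('v \<Rightarrow> real) \<Rightarrow> nat \<Rightarrow> (nat list \<Rightarrow> 'v::ab_group_add) \<Rightarrow> bool" where
  "lipschitz_H nrm k F \<longleftrightarrow> (\<exists>C. \<forall>n\<in>kset UNIV k. \<forall>m\<in>kset UNIV k.
      nrm (F n - F m) \<le> C * real (hamming n m))"

end

theory Submission
  imports Defs "HOL-Library.Ramsey"
begin

lemma osc_one:
  fixes \<psi> :: "nat set \<Rightarrow> real"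
  assumes Y: "infinite Y" and d: "\<delta> > 0"
    and bnd: "\<And>X. X \<subseteq> Y \<Longrightarrow> finite X \<Longrightarrow> card X = r \<Longrightarrow> 0 \<le> \<psi> X \<and> \<psi> X \<le> B"
  shows "\<exists>Y'. Y' \<subseteq> Y \<and> infinite Y' \<and> (\<exists>c. \<forall>X. X \<subseteq> Y' \<and> finite X \<and> card X = r \<longrightarrow> c \<le> \<psi> X \<and> \<psi> X < c + \<delta>)"
proof -
  define col where "col X = nat \<lfloor>\<psi> X / \<delta>\<rfloor>" for X
  define s where "s = Suc (nat \<lfloor>B / \<delta>\<rfloor>)"
  have "\<forall>X. X \<subseteq> Y \<and> finite X \<and> card X = r \<longrightarrow> col X < s"
  proof (intro allI impI)
    fix X assume "X \<subseteq> Y \<and> finite X \<and> card X = r"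
    with bnd have "0 \<le> \<psi> X" "\<psi> X \<le> B" by auto
    hence "\<psi> X / \<delta> \<le> B / \<delta>" using d by (simp add: divide_right_mono)
    hence "\<lfloor>\<psi> X / \<delta>\<rfloor> \<le> \<lfloor>B / \<delta>\<rfloor>" by (rule floor_mono)
    thus "col X < s" unfolding col_def s_def by linarith
  qed
  from Ramsey[OF Y this] obtain Y' t where Y': "Y' \<subseteq> Y" "infinite Y'"
    and t: "\<forall>X. X \<subseteq> Y' \<and> finite X \<and> card X = r \<longrightarrow> col X = t" by blast
  have "\<forall>X. X \<subseteq> Y' \<and> finite X \<and> card X = r \<longrightarrow> real t * \<delta> \<le> \<psi> X \<and> \<psi> X < real t * \<delta> + \<delta>"
  proof (intro allI impI)
    fix X assume X: "X \<subseteq> Y' \<and> finite X \<and> card X = r"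
    with bnd Y' have p0: "0 \<le> \<psi> X" by auto
    have ct: "nat \<lfloor>\<psi> X / \<delta>\<rfloor> = t" using t X unfolding col_def by auto
    have fl: "\<lfloor>\<psi> X / \<delta>\<rfloor> = int t" using ct p0 d by auto
    have "real t \<le> \<psi> X / \<delta>" "\<psi> X / \<delta> < real t + 1" using fl by linarith+
    thus "real t * \<delta> \<le> \<psi> X \<and> \<psi> X < real t * \<delta> + \<delta>" using d
      by (auto simp: field_simps)
  qed
  thus ?thesis using Y' by (intro exI[of _ Y'] conjI exI[of _ "real t * \<delta>"]) auto
qed

lemma osc_many:
  fixes L :: "(nat set \<Rightarrow> real) list"
  assumes d: "\<delta> > 0"
    and bnd: "\<And>\<psi> X. \<psi> \<in> set L \<Longrightarrow> finite X \<Longrightarrow> card X = r \<Longrightarrow> 0 \<le> \<psi> X \<and> \<psi> X \<le> B"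
  shows "infinite Y \<Longrightarrow> \<exists>Y'. Y' \<subseteq> Y \<and> infinite Y' \<and> (\<forall>\<psi>\<in>set L. \<exists>c. \<forall>X. X \<subseteq> Y' \<and> finite X \<and> card X = r \<longrightarrow> c \<le> \<psi> X \<and> \<psi> X < c + \<delta>)"
  using bnd
proof (induction L arbitrary: Y)
  case Nil
  then show ?case by (intro exI[of _ Y]) simp
next
  case (Cons \<psi> L)
  have b1: "\<And>X. X \<subseteq> Y \<Longrightarrow> finite X \<Longrightarrow> card X = r \<Longrightarrow> 0 \<le> \<psi> X \<and> \<psi> X \<le> B"
    using Cons.prems(2)[of \<psi>] by simp
  have "\<exists>Y'. Y' \<subseteq> Y \<and> infinite Y' \<and> (\<exists>c. \<forall>X. X \<subseteq> Y' \<and> finite X \<and> card X = r \<longrightarrow> c \<le> \<psi> X \<and> \<psi> X < c + \<delta>)"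
    by (rule osc_one[OF Cons.prems(1) d b1])
  then obtain Y1 where Y1: "Y1 \<subseteq> Y" "infinite Y1" and
    c1: "\<exists>c. \<forall>X. X \<subseteq> Y1 \<and> finite X \<and> card X = r \<longrightarrow> c \<le> \<psi> X \<and> \<psi> X < c + \<delta>"
    by (elim exE conjE) (rule that, assumption, assumption, rule exI, assumption)
  have b2: "\<And>\<phi> X. \<phi> \<in> set L \<Longrightarrow> finite X \<Longrightarrow> card X = r \<Longrightarrow> 0 \<le> \<phi> X \<and> \<phi> X \<le> B"
    using Cons.prems(2) by simp
  obtain Y2 where Y2: "Y2 \<subseteq> Y1" "infinite Y2" and
    c2: "\<forall>\<phi>\<in>set L. \<exists>c. \<forall>X. X \<subseteq> Y2 \<and> finite X \<and> card X = r \<longrightarrow> c \<le> \<phi> X \<and> \<phi> X < c + \<delta>"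
    using Cons.IH[OF Y1(2)] b2 by blast
  obtain c where c: "\<forall>X. X \<subseteq> Y1 \<and> finite X \<and> card X = r \<longrightarrow> c \<le> \<psi> X \<and> \<psi> X < c + \<delta>"
    using c1 by blast
  have "\<forall>X. X \<subseteq> Y2 \<and> finite X \<and> card X = r \<longrightarrow> c \<le> \<psi> X \<and> \<psi> X < c + \<delta>"
  proof (intro allI impI)
    fix X assume X: "X \<subseteq> Y2 \<and> finite X \<and> card X = r"
    hence "X \<subseteq> Y1 \<and> finite X \<and> card X = r" using Y2(1) by auto
    thus "c \<le> \<psi> X \<and> \<psi> X < c + \<delta>" by (rule c[rule_format])
  qed
  hence "\<forall>\<phi>\<in>set (\<psi> # L). \<exists>c. \<forall>X. X \<subseteq> Y2 \<and> finite X \<and> card X = r \<longrightarrow> c \<le> \<phi> X \<and> \<phi> X < c + \<delta>"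
    using c2 by auto
  moreover have "Y2 \<subseteq> Y" using Y1 Y2 by simp
  ultimately show ?case using Y2(2) by blast
qed

definition enc :: "nat \<Rightarrow> nat \<Rightarrow> nat list \<Rightarrow> nat list \<Rightarrow> nat list" where
  "enc k j n m = map (\<lambda>i. if i \<le> j then n!i else m!(i-1)) [0..<Suc k]"
definition dn :: "nat \<Rightarrow> nat \<Rightarrow> nat list \<Rightarrow> nat list" where
  "dn k j xs = map (\<lambda>i. xs!(if i \<le> j then i else Suc i)) [0..<k]"
definition dm :: "nat \<Rightarrow> nat \<Rightarrow> nat list \<Rightarrow> nat list" where
  "dm k j xs = map (\<lambda>i. xs!(if i < j then i else Suc i)) [0..<k]"

lemma Hj_props:
  assumes "(n, m) \<in> Hj M k j"
  shows "length n = k" "length m = k" "sorted_wrt (<) n" "sorted_wrt (<) m"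
    "set n \<subseteq> M" "set m \<subseteq> M" "\<And>i. i < k \<Longrightarrow> i \<noteq> j \<Longrightarrow> n!i = m!i" "n!j < m!j"
  using assms by (auto simp: Hj_def kset_def)

lemma enc_sorted:
  assumes H: "(n, m) \<in> Hj M k j" and j: "j < k"
  shows "sorted_wrt (<) (enc k j n m)"
proof -
  note P = Hj_props[OF H]
  have sn: "\<And>a b. a < b \<Longrightarrow> b < k \<Longrightarrow> n!a < n!b"
    using P(1,3) by (simp add: sorted_wrt_iff_nth_less)
  have sm: "\<And>a b. a < b \<Longrightarrow> b < k \<Longrightarrow> m!a < m!b"
    using P(2,4) by (simp add: sorted_wrt_iff_nth_less)
  show ?thesis
  proof (subst sorted_wrt_iff_nth_Suc_transp)
    show "transp ((<) :: nat \<Rightarrow> nat \<Rightarrow> bool)" by (rule transpI) simp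
    show "\<forall>i. Suc i < length (enc k j n m) \<longrightarrow> enc k j n m ! i < enc k j n m ! Suc i"
    proof (intro allI impI)
      fix i assume i: "Suc i < length (enc k j n m)"
      hence ik: "i < k" by (simp add: enc_def)
      have e1: "enc k j n m ! i = (if i \<le> j then n!i else m!(i-1))"
        using ik by (simp add: enc_def nth_map del: upt_Suc)
      have e2: "enc k j n m ! Suc i = (if Suc i \<le> j then n!Suc i else m!i)"
        using ik by (simp add: enc_def nth_map del: upt_Suc)
      show "enc k j n m ! i < enc k j n m ! Suc i"
      proof (cases "i < j")
        case True
        then show ?thesis using e1 e2 sn[of i "Suc i"] j by auto
      next
        case False
        show ?thesis
        proof (cases "i = j")
          case True
          then show ?thesis using e1 e2 P(8) by simp
        next
          case False
          with \<open>\<not> i < j\<close> have "j < i" by simp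
          then show ?thesis using e1 e2 sm[of "i-1" i] ik by auto
        qed
      qed
    qed
  qed
qed

lemma enc_set:
  assumes H: "(n, m) \<in> Hj M k j" and j: "j < k"
  shows "set (enc k j n m) = set n \<union> set m"
proof -
  note P = Hj_props[OF H]
  show ?thesis
  proof (intro equalityI subsetI)
    fix x assume "x \<in> set (enc k j n m)"
    then obtain i where i: "i < Suc k" "x = (if i \<le> j then n!i else m!(i-1))"
      by (auto simp: enc_def simp del: upt_Suc)
    show "x \<in> set n \<union> set m"
    proof (cases "i \<le> j")
      case True
      then have "x = n!i" "i < length n" using i j P(1) by auto
      then show ?thesis by auto
    next
      case False
      then have "x = m!(i-1)" "i - 1 < length m" using i P(2) by auto
      then show ?thesis by auto
    qed
  next
    fix x assume "x \<in> set n \<union> set m"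
    have imgE: "set (enc k j n m) = (\<lambda>i. if i \<le> j then n!i else m!(i-1)) ` {..<Suc k}"
      by (simp add: enc_def lessThan_atLeast0 del: upt_Suc)
    show "x \<in> set (enc k j n m)"
      using \<open>x \<in> set n \<union> set m\<close>
    proof
      assume "x \<in> set n"
      then obtain i where i: "i < k" "x = n!i" using P(1) by (auto simp: in_set_conv_nth)
      show ?thesis
      proof (cases "i \<le> j")
        case True then show ?thesis using i imgE by (auto intro!: image_eqI[of _ _ i])
      next
        case False
        then have "x = m!i" using P(7)[of i] i by auto
        then show ?thesis using False i imgE by (auto intro!: image_eqI[of _ _ "Suc i"])
      qed
    next
      assume "x \<in> set m"
      then obtain i where i: "i < k" "x = m!i" using P(2) by (auto simp: in_set_conv_nth)
      show ?thesis
      proof (cases "i < j")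
        case True
        then have "x = n!i" using P(7)[of i] i by auto
        then show ?thesis using True i imgE by (auto intro!: image_eqI[of _ _ i])
      next
        case False
        then show ?thesis using i imgE by (auto intro!: image_eqI[of _ _ "Suc i"])
      qed
    qed
  qed
qed

lemma decode:
  assumes H: "(n, m) \<in> Hj M k j" and j: "j < k"
  defines "X \<equiv> set n \<union> set m"
  shows "X \<subseteq> M" "finite X" "card X = Suc k"
    "dn k j (sorted_list_of_set X) = n" "dm k j (sorted_list_of_set X) = m"
proof -
  note P = Hj_props[OF H]
  show "X \<subseteq> M" using P(5,6) X_def by auto
  show fin: "finite X" using X_def by auto
  have s: "sorted_wrt (<) (enc k j n m)" by (rule enc_sorted[OF H j])
  have st: "set (enc k j n m) = X" using enc_set[OF H j] X_def by simp
  have sl: "sorted_list_of_set X = enc k j n m"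
    using strict_sorted_equal[OF s, of "sorted_list_of_set X"] fin st
    by (simp add: sorted_list_of_set.strict_sorted_key_list_of_set)
  have "distinct (enc k j n m)" using s by (simp add: strict_sorted_iff)
  hence "card X = length (enc k j n m)" using st distinct_card by metis
  thus "card X = Suc k" by (simp add: enc_def)
  show "dn k j (sorted_list_of_set X) = n"
  proof (rule nth_equalityI)
    show "length (dn k j (sorted_list_of_set X)) = length n" using P(1) by (simp add: dn_def)
    fix i assume "i < length (dn k j (sorted_list_of_set X))"
    hence i: "i < k" by (simp add: dn_def)
    show "dn k j (sorted_list_of_set X) ! i = n ! i"
      using i P(7)[of i] unfolding sl dn_def enc_def
      by (auto simp del: upt_Suc simp: nth_append)
  qed
  show "dm k j (sorted_list_of_set X) = m"
  proof (rule nth_equalityI)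
    show "length (dm k j (sorted_list_of_set X)) = length m" using P(2) by (simp add: dm_def)
    fix i assume "i < length (dm k j (sorted_list_of_set X))"
    hence i: "i < k" by (simp add: dm_def)
    show "dm k j (sorted_list_of_set X) ! i = m ! i"
      using i P(7)[of i] unfolding sl dm_def enc_def
      by (auto simp del: upt_Suc simp: nth_append)
  qed
qed

lemma pair_exists:
  assumes M: "infinite M" and j: "j < k"
  shows "\<exists>n m. (n, m) \<in> Hj M k j"
proof -
  define e where "e = enumerate M"
  have sm: "strict_mono e" using M by (simp add: e_def strict_mono_enumerate)
  have eM: "\<And>i. e i \<in> M" using M by (simp add: e_def enumerate_in_set)
  define n where "n = map (\<lambda>i. e (if i \<le> j then i else Suc i)) [0..<k]"
  define m where "m = map (\<lambda>i. e (if i < j then i else Suc i)) [0..<k]"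
  have "n \<in> kset M k"
    unfolding kset_def n_def using eM
    by (auto simp: sorted_wrt_iff_nth_less strict_mono_less[OF sm])
  moreover have "m \<in> kset M k"
    unfolding kset_def m_def using eM
    by (auto simp: sorted_wrt_iff_nth_less strict_mono_less[OF sm])
  moreover have "\<forall>i<k. i \<noteq> j \<longrightarrow> n ! i = m ! i"
    by (auto simp: n_def m_def)
  moreover have "n ! j < m ! j"
    using j by (simp add: n_def m_def strict_mono_less[OF sm])
  ultimately show ?thesis unfolding Hj_def by blast
qed

lemma hamming_le: "length n = k \<Longrightarrow> hamming n m \<le> k"
  unfolding hamming_def
  by (metis (no_types, lifting) card_lessThan card_mono finite_lessThan lessThan_iff mem_Collect_eq subsetI)

lemma norm_le_pnorm:
  assumes "p > 0"
  shows "norm (fst x) \<le> pnorm p x" "norm (snd x) \<le> pnorm p x"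
proof -
  have a: "t = (t powr p) powr (1/p)" if "t \<ge> 0" for t :: real
    using that assms by (simp add: powr_powr)
  have m: "(t powr p) powr (1/p) \<le> (t powr p + s powr p) powr (1/p)" if "t \<ge> 0" "s \<ge> 0" for t s :: real
    using assms by (intro powr_mono2) auto
  show "norm (fst x) \<le> pnorm p x" unfolding pnorm_def
    using a[of "norm (fst x)"] m[of "norm (fst x)" "norm (snd x)"] by simp
  show "norm (snd x) \<le> pnorm p x" unfolding pnorm_def
    using a[of "norm (snd x)"] m[of "norm (snd x)" "norm (fst x)"] by (simp add: add.commute)
qed

lemma pnorm_powr:
  assumes "p > 0"
  shows "pnorm p x powr p = norm (fst x) powr p + norm (snd x) powr p"
  unfolding pnorm_def using assms by (simp add: powr_powr)

lemma pnorm_nonneg: "pnorm p x \<ge> 0" by (simp add: pnorm_def)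

lemma sup_near:
  fixes F :: "'x \<Rightarrow> real"
  assumes "x0 \<in> S" "\<And>x. x \<in> S \<Longrightarrow> F x \<le> F x0 + d"
  shows "F x0 \<le> (SUP x\<in>S. F x)" "(SUP x\<in>S. F x) \<le> F x0 + d"
proof -
  have bdd: "bdd_above (F ` S)" using assms(2) by (intro bdd_aboveI2) auto
  show "F x0 \<le> (SUP x\<in>S. F x)" by (rule cSUP_upper[OF assms(1) bdd])
  show "(SUP x\<in>S. F x) \<le> F x0 + d" using assms by (intro cSUP_least) auto
qed

lemma close_pow:
  fixes p B \<delta>0 e :: real
  assumes uc: "\<forall>x\<in>{0..B+1}. \<forall>x'\<in>{0..B+1}. dist x' x < \<delta>0 \<longrightarrow> dist (x' powr p) (x powr p) < e"
    and a0: "0 \<le> a0" "a0 \<le> B" and x: "a0 \<le> x" "x \<le> a0 + d" and d: "d \<le> 1" "d < \<delta>0"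
  shows "x powr p \<le> a0 powr p + e"
proof -
  have "a0 \<in> {0..B+1}" "x \<in> {0..B+1}" using a0 x d by auto
  moreover have "dist x a0 < \<delta>0" using x d by (simp add: dist_real_def)
  ultimately have "dist (x powr p) (a0 powr p) < e" using uc by blast
  thus ?thesis by (simp add: dist_real_def)
qed

theorem mainTheorem2:
  fixes p :: real and k :: nat and \<epsilon> :: real
    and f :: "nat list \<Rightarrow> 'a::banach" and g :: "nat list \<Rightarrow> 'b::banach"
  assumes "1 < p" and "\<epsilon> > 0"
    and "lipschitz_H (pnorm p) k (\<lambda>n. (f n, g n))"
  shows "\<exists>M. infinite M \<and> (\<forall>j<k.
      lipj norm M k j f powr p + lipj norm M k j g powr p
        \<le> lipj (pnorm p) UNIV k j (\<lambda>n. (f n, g n)) powr p + \<epsilon>)"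
proof -
  have p0: "p > 0" using assms(1) by simp
  obtain C where C: "\<forall>n\<in>kset UNIV k. \<forall>m\<in>kset UNIV k.
      pnorm p ((f n, g n) - (f m, g m)) \<le> C * real (hamming n m)"
    using assms(3) unfolding lipschitz_H_def by blast
  define B where "B = \<bar>C\<bar> * real k"
  have Bh: "pnorm p ((f n, g n) - (f m, g m)) \<le> B" if "n \<in> kset UNIV k" "m \<in> kset UNIV k" for n m
  proof -
    have "hamming n m \<le> k" using that by (intro hamming_le) (simp add: kset_def)
    hence "C * real (hamming n m) \<le> \<bar>C\<bar> * real k"
      by (meson abs_ge_self abs_ge_zero mult_mono of_nat_0_le_iff of_nat_mono order_trans)
    thus ?thesis using C that unfolding B_def by force
  qed
  have bf: "norm (f n - f m) \<le> B" if "n \<in> kset UNIV k" "m \<in> kset UNIV k" for n m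
    using norm_le_pnorm(1)[OF p0, of "(f n, g n) - (f m, g m)"] Bh[OF that] by simp
  have bg: "norm (g n - g m) \<le> B" if "n \<in> kset UNIV k" "m \<in> kset UNIV k" for n m
    using norm_le_pnorm(2)[OF p0, of "(f n, g n) - (f m, g m)"] Bh[OF that] by simp
  have "continuous_on {0..B+1} (\<lambda>x::real. x powr p)"
    using p0 by (intro continuous_on_powr' continuous_intros) auto
  hence "uniformly_continuous_on {0..B+1} (\<lambda>x::real. x powr p)"
    by (intro compact_uniformly_continuous) auto
  then obtain \<delta>0 where d0: "\<delta>0 > 0" and
    uc: "\<forall>x\<in>{0..B+1}. \<forall>x'\<in>{0..B+1}. dist x' x < \<delta>0 \<longrightarrow> dist (x' powr p) (x powr p) < \<epsilon>/2"
    unfolding uniformly_continuous_on_def using assms(2) by (meson half_gt_zero)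
  define \<delta> where "\<delta> = min (\<delta>0/2) 1"
  have dpos: "\<delta> > 0" and d1: "\<delta> \<le> 1" and dd0: "\<delta> < \<delta>0" using d0 by (auto simp: \<delta>_def)
  define sl where "sl X = sorted_list_of_set (X :: nat set)" for X
  define \<psi>f where "\<psi>f j X = (if dn k j (sl X) \<in> kset UNIV k \<and> dm k j (sl X) \<in> kset UNIV k
     then norm (f (dn k j (sl X)) - f (dm k j (sl X))) else 0)" for j X
  define \<psi>g where "\<psi>g j X = (if dn k j (sl X) \<in> kset UNIV k \<and> dm k j (sl X) \<in> kset UNIV k
     then norm (g (dn k j (sl X)) - g (dm k j (sl X))) else 0)" for j X
  define L where "L = map \<psi>f [0..<k] @ map \<psi>g [0..<k]"
  have B0: "0 \<le> B" unfolding B_def by simp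
  have bndL: "0 \<le> \<psi> X \<and> \<psi> X \<le> B" if "\<psi> \<in> set L" for \<psi> X
    using that bf bg B0 unfolding L_def \<psi>f_def \<psi>g_def by auto
  obtain M where M: "infinite M" and
    osc: "\<forall>\<psi>\<in>set L. \<exists>c. \<forall>X. X \<subseteq> M \<and> finite X \<and> card X = Suc k \<longrightarrow> c \<le> \<psi> X \<and> \<psi> X < c + \<delta>"
  proof -
    have "\<exists>Y'. Y' \<subseteq> UNIV \<and> infinite Y' \<and> (\<forall>\<psi>\<in>set L. \<exists>c. \<forall>X. X \<subseteq> Y' \<and> finite X \<and> card X = Suc k \<longrightarrow> c \<le> \<psi> X \<and> \<psi> X < c + \<delta>)"
      by (rule osc_many[where L=L and r="Suc k" and B=B and \<delta>=\<delta>]) (simp_all add: dpos bndL)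
    thus ?thesis by (elim exE conjE) (rule that; assumption)
  qed
  have inK: "n \<in> kset UNIV k" "m \<in> kset UNIV k" if "(n, m) \<in> Hj M k j" for n m j
    using Hj_props[OF that] by (auto simp: kset_def)
  have valf: "\<psi>f j (set n \<union> set m) = norm (f n - f m)" if "(n, m) \<in> Hj M k j" "j < k" for n m j
    using decode[OF that] inK[OF that(1)] unfolding \<psi>f_def sl_def by simp
  have valg: "\<psi>g j (set n \<union> set m) = norm (g n - g m)" if "(n, m) \<in> Hj M k j" "j < k" for n m j
    using decode[OF that] inK[OF that(1)] unfolding \<psi>g_def sl_def by simp
  have "lipj norm M k j f powr p + lipj norm M k j g powr p
        \<le> lipj (pnorm p) UNIV k j (\<lambda>n. (f n, g n)) powr p + \<epsilon>" if j: "j < k" for j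
  proof -
    obtain n0 m0 where H0: "(n0, m0) \<in> Hj M k j" using pair_exists[OF M j] by blast
    have "\<psi>f j \<in> set L" using j unfolding L_def by simp
    from bspec[OF osc this] obtain cf where cf: "\<forall>X. X \<subseteq> M \<and> finite X \<and> card X = Suc k \<longrightarrow> cf \<le> \<psi>f j X \<and> \<psi>f j X < cf + \<delta>"
      by (elim exE) (rule that)
    have "\<psi>g j \<in> set L" using j unfolding L_def by simp
    from bspec[OF osc this] obtain cg where cg: "\<forall>X. X \<subseteq> M \<and> finite X \<and> card X = Suc k \<longrightarrow> cg \<le> \<psi>g j X \<and> \<psi>g j X < cg + \<delta>"
      by (elim exE) (rule that)
    have Xf: "cf \<le> norm (f n - f m) \<and> norm (f n - f m) < cf + \<delta>" if "(n, m) \<in> Hj M k j" for n m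
      using cf decode[OF that j] valf[OF that j] by metis
    have Xg: "cg \<le> norm (g n - g m) \<and> norm (g n - g m) < cg + \<delta>" if "(n, m) \<in> Hj M k j" for n m
      using cg decode[OF that j] valg[OF that j] by metis
    define a0 where "a0 = norm (f n0 - f m0)"
    define b0 where "b0 = norm (g n0 - g m0)"
    have sf: "a0 \<le> lipj norm M k j f" "lipj norm M k j f \<le> a0 + \<delta>"
      unfolding lipj_def a0_def
      using sup_near[OF H0, of "\<lambda>nm. norm (f (fst nm) - f (snd nm))" \<delta>] Xf Xf[OF H0]
      by (force simp: split_beta)+
    have sg: "b0 \<le> lipj norm M k j g" "lipj norm M k j g \<le> b0 + \<delta>"
      unfolding lipj_def b0_def
      using sup_near[OF H0, of "\<lambda>nm. norm (g (fst nm) - g (snd nm))" \<delta>] Xg Xg[OF H0]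
      by (force simp: split_beta)+
    have a0B: "0 \<le> a0" "a0 \<le> B" using bf[OF inK[OF H0]] by (auto simp: a0_def)
    have b0B: "0 \<le> b0" "b0 \<le> B" using bg[OF inK[OF H0]] by (auto simp: b0_def)
    have pf: "lipj norm M k j f powr p \<le> a0 powr p + \<epsilon>/2"
      by (rule close_pow[OF uc a0B sf d1 dd0])
    have pg: "lipj norm M k j g powr p \<le> b0 powr p + \<epsilon>/2"
      by (rule close_pow[OF uc b0B sg d1 dd0])
    define P where "P = pnorm p ((f n0, g n0) - (f m0, g m0))"
    have PP: "P powr p = a0 powr p + b0 powr p"
      unfolding P_def a0_def b0_def using pnorm_powr[OF p0, of "(f n0 - f m0, g n0 - g m0)"] by simp
    have H0U: "(n0, m0) \<in> Hj UNIV k j" using H0 unfolding Hj_def kset_def by auto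
    have "P \<le> lipj (pnorm p) UNIV k j (\<lambda>n. (f n, g n))"
      unfolding lipj_def P_def
    proof (rule cSUP_upper2[OF _ H0U])
      show "bdd_above ((\<lambda>nm. pnorm p ((f (fst nm), g (fst nm)) - (f (snd nm), g (snd nm)))) ` Hj UNIV k j)"
        using Bh by (intro bdd_aboveI2[where M=B]) (auto simp: Hj_def)
    qed simp
    hence "P powr p \<le> lipj (pnorm p) UNIV k j (\<lambda>n. (f n, g n)) powr p"
      using p0 by (intro powr_mono2) (auto simp: P_def pnorm_nonneg)
    thus ?thesis using pf pg PP by linarith
  qed
  thus ?thesis using M by blast
qed

end
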